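(* Let $\lambda$ be a partition and $a,b,c,d\in\mathbb F$. Then: (i) $\langle v_\lambda,\Xi_{aa}v_\lambda\rangle=\sum_{x\in C_\lambda}\mathrm{sgn}(x)\,\delta_{a,x}$; (ii) $\langle v_\lambda,\Xi_{abcd}v_\lambda\rangle\neq0$ only if ($a=b$ and $c=d$) or ($a=d$ and $b=c$); (iii) if $a\ne b$, then $\langle v_\lambda,\Xi_{abba}v_\lambda\rangle=-\sum_{x,x'\in C_\lambda}\mathrm{sgn}(x\,x')\,\delta_{a,x}\,\delta_{b,x'}$.
   Context: $\mathbb F=\mathbb Z+\frac12$. $\mathsf F$ has orthonormal basis $v_S$ for strictly decreasing sequences $S=(s_i)_{i\ge1}\subset\mathbb F$ with $s_{i+1}=s_i-1$ for large $i$ (think $v_S=\underline{s_1}\wedge\underline{s_2}\wedge\cdots$). For $k\in\mathbb F$: $\psi_kv_S=0$ if $k\in S$, else $\psi_kv_S=(-1)^{\#\{i:s_i>k\}}v_{S\cup\{k\}}$; $\psi^*_kv_S=(-1)^{i-1}v_{S\setminus\{s_i\}}$ if $k=s_i$, else $0$. For $a>0$, $\psi_a,\psi^*_{-a}$ are creation and $\psi_{-a},\psi^*_a$ annihilation operators; $:\phi_1\cdots\phi_k:=\mathrm{sgn}(\sigma)\phi_{\sigma(1)}\cdots\phi_{\sigma(k)}$ for any permutation $\sigma$ moving creation operators to the left of annihilation operators. $\Xi_{ab}=:\psi_a\psi^*_b:$, $\Xi_{abcd}=:\psi_a\psi^*_b\psi_c\psi^*_d:$. For a partition $\lambda$, $v_\lambda=v_{S_\lambda}$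 with $S_\lambda=(\lambda_j-j+\frac12)_{j\ge1}$. Modified Frobenius coordinates: if $d$ is the number of $i$ with $\lambda_i\ge i$, put $c_i=\lambda_i-i+\frac12$, $c_i^*=-(\lambda'_i-i)-\frac12$ ($i=1,\dots,d$, $\lambda'$ the transpose partition), and $C_\lambda=\{c_1,\dots,c_d,c^*_1,\dots,c^*_d\}$. *)

theory Defs
  imports Main "HOL.Real"
begin

definition HalfInt :: "real set" where
  "HalfInt = {real_of_int n + 1/2 | n. True}"

text \<open>A basis vector v_S is indexed by the set of entries of the strictly decreasing
  sequence S. A vector is a (finitely supported) coefficient function on index sets.\<close>

type_synonym vec = "real set \<Rightarrow> real"

definition basis :: "real set \<Rightarrow> vec" where
  "basis S = (\<lambda>T. if T = S then 1 else 0)"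

definition scaleV :: "real \<Rightarrow> vec \<Rightarrow> vec" where
  "scaleV c v = (\<lambda>T. c * v T)"

definition zeroV :: vec where
  "zeroV = (\<lambda>T. 0)"

definition lin_ext :: "(real set \<Rightarrow> vec) \<Rightarrow> vec \<Rightarrow> vec" where
  "lin_ext f v = (\<lambda>T. \<Sum>S\<in>{S. v S \<noteq> 0}. v S * f S T)"

definition innerF :: "vec \<Rightarrow> vec \<Rightarrow> real" where
  "innerF u v = (\<Sum>S\<in>{S. u S \<noteq> 0 \<and> v S \<noteq> 0}. u S * v S)"

definition nabove :: "real set \<Rightarrow> real \<Rightarrow> nat" where
  "nabove S k = card {s\<in>S. s > k}"

definition psi_basis :: "real \<Rightarrow> real set \<Rightarrow> vec" where
  "psi_basis k S = (if k \<in> S then zeroV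
                    else scaleV ((-1) ^ nabove S k) (basis (insert k S)))"

text \<open>If k = s_i then i - 1 = #{j : s_j > k}.\<close>
definition psistar_basis :: "real \<Rightarrow> real set \<Rightarrow> vec" where
  "psistar_basis k S = (if k \<in> S then scaleV ((-1) ^ nabove S k) (basis (S - {k}))
                        else zeroV)"

datatype fop = Psi real | PsiS real

fun act :: "fop \<Rightarrow> vec \<Rightarrow> vec" where
  "act (Psi k) v = lin_ext (psi_basis k) v"
| "act (PsiS k) v = lin_ext (psistar_basis k) v"

fun creation :: "fop \<Rightarrow> bool" where
  "creation (Psi k) = (k > 0)"
| "creation (PsiS k) = (k < 0)"

text \<open>Product phi_1 ... phi_k applied to v (phi_k acts first).\<close>
definition word_apply :: "fop list \<Rightarrow> vec \<Rightarrow> vec" where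
  "word_apply ops v = foldr act ops v"

text \<open>Number of inversions of the stable permutation moving creation operators to the
  left of annihilation operators; its parity is sgn(sigma).\<close>
definition n_inv :: "fop list \<Rightarrow> nat" where
  "n_inv ops = card {(i, j). i < j \<and> j < length ops \<and>
                  \<not> creation (ops ! i) \<and> creation (ops ! j)}"

definition normal_ord :: "fop list \<Rightarrow> vec \<Rightarrow> vec" where
  "normal_ord ops v = scaleV ((-1) ^ n_inv ops)
     (word_apply (filter creation ops @ filter (\<lambda>x. \<not> creation x) ops) v)"

definition Xi2 :: "real \<Rightarrow> real \<Rightarrow> vec \<Rightarrow> vec" where
  "Xi2 a b = normal_ord [Psi a, PsiS b]"

definition Xi4 :: "real \<Rightarrow> real \<Rightarrow> real \<Rightarrow> real \<Rightarrow> vec \<Rightarrow> vec" where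
  "Xi4 a b c d = normal_ord [Psi a, PsiS b, Psi c, PsiS d]"

definition is_partition :: "nat list \<Rightarrow> bool" where
  "is_partition lam \<longleftrightarrow> sorted_wrt (\<ge>) lam \<and> (\<forall>x\<in>set lam. 0 < x)"

definition part :: "nat list \<Rightarrow> nat \<Rightarrow> nat" where
  "part lam j = (if 1 \<le> j \<and> j \<le> length lam then lam ! (j - 1) else 0)"

definition conjp :: "nat list \<Rightarrow> nat \<Rightarrow> nat" where
  "conjp lam i = card {j. 1 \<le> j \<and> i \<le> part lam j}"

definition S_of :: "nat list \<Rightarrow> real set" where
  "S_of lam = {real (part lam j) - real j + 1/2 | j. 1 \<le> j}"

definition v_of :: "nat list \<Rightarrow> vec" where
  "v_of lam = basis (S_of lam)"

definition frob_d :: "nat list \<Rightarrow> nat" where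
  "frob_d lam = card {i. 1 \<le> i \<and> i \<le> part lam i}"

definition C_of :: "nat list \<Rightarrow> real set" where
  "C_of lam =
     {real (part lam i) - real i + 1/2 | i. 1 \<le> i \<and> i \<le> frob_d lam}
   \<union> {- (real (conjp lam i) - real i) - 1/2 | i. 1 \<le> i \<and> i \<le> frob_d lam}"

definition delta :: "real \<Rightarrow> real \<Rightarrow> real" where
  "delta x y = (if x = y then 1 else 0)"

end

theory Submission
  imports Defs "HOL-Library.Multiset"
begin


lemma scaleV_zeroV[simp]: "scaleV c zeroV = zeroV"
  by (simp add: scaleV_def zeroV_def)
lemma scaleV_scaleV[simp]: "scaleV c (scaleV d v) = scaleV (c*d) v"
  by (simp add: scaleV_def mult.assoc)
lemma scaleV_0[simp]: "scaleV 0 v = zeroV"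
  by (simp add: scaleV_def zeroV_def)

lemma lin_ext_scale_basis: "lin_ext f (scaleV c (basis S)) = scaleV c (f S)"
proof (cases "c = 0")
  case True
  then show ?thesis by (simp add: lin_ext_def scaleV_def basis_def zeroV_def)
next
  case False
  then have "{T. scaleV c (basis S) T \<noteq> 0} = {S}" by (auto simp: scaleV_def basis_def)
  then show ?thesis using False by (simp add: lin_ext_def scaleV_def basis_def)
qed

lemma lin_ext_zero: "lin_ext f zeroV = zeroV"
  by (simp add: lin_ext_def zeroV_def)

lemma act_Psi[simp]: "act (Psi k) (scaleV c (basis S)) =
   (if k \<in> S then zeroV else scaleV (c * (-1) ^ nabove S k) (basis (insert k S)))"
  by (simp add: lin_ext_scale_basis psi_basis_def)
lemma act_PsiS[simp]: "act (PsiS k) (scaleV c (basis S)) =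
   (if k \<in> S then scaleV (c * (-1) ^ nabove S k) (basis (S - {k})) else zeroV)"
  by (simp add: lin_ext_scale_basis psistar_basis_def)
lemma act_zero[simp]: "act op zeroV = zeroV"
  by (cases op) (simp_all add: lin_ext_zero)

declare act.simps[simp del]

lemma basis_scale: "basis S = scaleV 1 (basis S)"
  by (simp add: scaleV_def)

lemma innerF_basis[simp]: "innerF (basis S) (scaleV c (basis T)) = (if T = S then c else 0)"
proof -
  have "{U. basis S U \<noteq> 0 \<and> scaleV c (basis T) U \<noteq> 0} = (if T = S \<and> c \<noteq> 0 then {S} else {})"
    by (auto simp: basis_def scaleV_def)
  then show ?thesis by (auto simp: innerF_def basis_def scaleV_def)
qed
lemma innerF_zero[simp]: "innerF (basis S) zeroV = 0"
  by (simp add: innerF_def zeroV_def)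

lemma nabove_ins: "\<not> j < k \<Longrightarrow> nabove (insert k S) j = nabove S j"
  unfolding nabove_def by (rule arg_cong[where f=card]) auto
lemma nabove_rem: "\<not> j < k \<Longrightarrow> nabove (S - {k}) j = nabove S j"
  unfolding nabove_def by (rule arg_cong[where f=card]) auto

lemma word_apply_Cons[simp]: "word_apply (op # ops) v = act op (word_apply ops v)"
  by (simp add: word_apply_def)
lemma word_apply_Nil[simp]: "word_apply [] v = v"
  by (simp add: word_apply_def)

lemma word_inv: "\<exists>c T. word_apply ops (scaleV c0 (basis S)) = scaleV c (basis T) \<and>
  (c \<noteq> 0 \<longrightarrow> (\<forall>x. (if x\<in>T then 1 else 0::int) = (if x \<in> S then 1 else 0)
      + int (count (mset ops) (Psi x)) - int (count (mset ops) (PsiS x))))"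
proof (induction ops)
  case Nil
  then show ?case by auto
next
  case (Cons op ops)
  then obtain c T where cT: "word_apply ops (scaleV c0 (basis S)) = scaleV c (basis T)"
    and inv: "c \<noteq> 0 \<longrightarrow> (\<forall>x. (if x\<in>T then 1 else 0::int) = (if x \<in> S then 1 else 0)
      + int (count (mset ops) (Psi x)) - int (count (mset ops) (PsiS x)))" by blast
  show ?case
  proof (cases op)
    case (Psi k)
    show ?thesis
    proof (cases "k \<in> T")
      case True
      then show ?thesis using cT Psi by (intro exI[of _ 0] exI[of _ T]) simp
    next
      case False
      show ?thesis
      proof (intro exI[of _ "c * (-1) ^ nabove T k"] exI[of _ "insert k T"] conjI impI allI)
        show "word_apply (op # ops) (scaleV c0 (basis S)) = scaleV (c * (-1) ^ nabove T k) (basis (insert k T))"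
          using cT Psi False by simp
        fix x assume "c * (-1) ^ nabove T k \<noteq> 0"
        then have "c \<noteq> 0" by auto
        with inv have "(if x\<in>T then 1 else 0::int) = (if x \<in> S then 1 else 0)
          + int (count (mset ops) (Psi x)) - int (count (mset ops) (PsiS x))" by blast
        then show "(if x\<in>insert k T then 1 else 0::int) = (if x \<in> S then 1 else 0)
          + int (count (mset (op # ops)) (Psi x)) - int (count (mset (op # ops)) (PsiS x))"
          using False Psi by auto
      qed
    qed
  next
    case (PsiS k)
    show ?thesis
    proof (cases "k \<in> T")
      case False
      then show ?thesis using cT PsiS by (intro exI[of _ 0] exI[of _ T]) simp
    next
      case True
      show ?thesis
      proof (intro exI[of _ "c * (-1) ^ nabove T k"] exI[of _ "T - {k}"] conjI impI allI)
        show "word_apply (op # ops) (scaleV c0 (basis S)) = scaleV (c * (-1) ^ nabove T k) (basis (T - {k}))"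
          using cT PsiS True by simp
        fix x assume "c * (-1) ^ nabove T k \<noteq> 0"
        then have "c \<noteq> 0" by auto
        with inv have "(if x\<in>T then 1 else 0::int) = (if x \<in> S then 1 else 0)
          + int (count (mset ops) (Psi x)) - int (count (mset ops) (PsiS x))" by blast
        then show "(if x\<in>T - {k} then 1 else 0::int) = (if x \<in> S then 1 else 0)
          + int (count (mset (op # ops)) (Psi x)) - int (count (mset (op # ops)) (PsiS x))"
          using True PsiS by auto
      qed
    qed
  qed
qed

lemma part2:
  "innerF (basis S) (Xi4 a b c d (basis S)) \<noteq> 0 \<Longrightarrow> (a = b \<and> c = d) \<or> (a = d \<and> b = c)"
proof -
  assume H: "innerF (basis S) (Xi4 a b c d (basis S)) \<noteq> 0"
  define ops where "ops = [Psi a, PsiS b, Psi c, PsiS d]"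
  define ops' where "ops' = filter creation ops @ filter (\<lambda>x. \<not> creation x) ops"
  have ms: "mset ops' = mset ops" unfolding ops'_def
    by (metis mset_append mset_filter multiset_partition)
  obtain c' T where cT: "word_apply ops' (scaleV 1 (basis S)) = scaleV c' (basis T)"
    and inv: "c' \<noteq> 0 \<longrightarrow> (\<forall>x. (if x\<in>T then 1 else 0::int) = (if x \<in> S then 1 else 0)
      + int (count (mset ops') (Psi x)) - int (count (mset ops') (PsiS x)))"
    using word_inv by blast
  have "innerF (basis S) (Xi4 a b c d (basis S)) = (if T = S then (-1)^n_inv ops * c' else 0)"
    unfolding Xi4_def normal_ord_def ops'_def[symmetric] ops_def[symmetric]
    by (subst basis_scale[of S], subst cT) simp
  with H have TS: "T = S" and c0: "c' \<noteq> 0" by (auto split: if_splits)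
  have E: "count (mset ops) (Psi x) = count (mset ops) (PsiS x)" for x
  proof -
    from inv c0 have "(if x\<in>T then 1 else 0::int) = (if x \<in> S then 1 else 0)
      + int (count (mset ops') (Psi x)) - int (count (mset ops') (PsiS x))" by blast
    then have "int (count (mset ops') (Psi x)) = int (count (mset ops') (PsiS x))"
      using TS by simp
    then show ?thesis using ms by simp
  qed
  have E': "(if a = x then 1 else 0) + (if c = x then 1 else 0) = (if b = x then 1 else 0) + (if d = x then (1::nat) else 0)" for x
  proof -
    have "count (mset ops) (Psi x) = count (mset ops) (PsiS x)" by (rule E)
    moreover have "count (mset ops) (Psi x) = (if a = x then 1 else 0) + (if c = x then 1 else 0)"
      unfolding ops_def by (simp add: count_add_mset)
    moreover have "count (mset ops) (PsiS x) = (if b = x then 1 else 0) + (if d = x then 1 else 0)"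
      unfolding ops_def by (simp add: count_add_mset)
    ultimately show ?thesis by simp
  qed
  show ?thesis
  proof (cases "a = b")
    case True
    have "c = d" using E'[of c] True by (simp split: if_splits)
    then show ?thesis using True by simp
  next
    case False
    have "a = d" "a \<noteq> c" using E'[of a] False by (simp_all split: if_splits)
    moreover have "b = c" using E'[of b] False \<open>a = d\<close> by (simp split: if_splits)
    ultimately show ?thesis by simp
  qed
qed



lemma down_closed:
  fixes D :: "nat set"
  assumes "finite D" "\<forall>i\<in>D. 1 \<le> i" "\<forall>i\<in>D. \<forall>i'. 1 \<le> i' \<and> i' \<le> i \<longrightarrow> i' \<in> D"
  shows "D = {1..card D}"
proof (cases "D = {}")
  case True then show ?thesis by simp
next
  case False
  let ?M = "Max D"
  have "?M \<in> D" using assms(1) False by simp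
  have "D = {1..?M}"
  proof
    show "D \<subseteq> {1..?M}" using assms(1,2) by auto
    show "{1..?M} \<subseteq> D" using assms(3) \<open>?M \<in> D\<close> by auto
  qed
  then have "card D = ?M" by (metis card_atLeastAtMost diff_Suc_1)
  then show ?thesis using \<open>D = {1..?M}\<close> by simp
qed

lemma part_mono:
  assumes "is_partition lam" "1 \<le> i" "i \<le> j"
  shows "part lam j \<le> part lam i"
proof (cases "j \<le> length lam")
  case False then show ?thesis by (simp add: Defs.part_def)
next
  case True
  have s: "sorted_wrt (\<ge>) lam" using assms(1) by (simp add: is_partition_def)
  show ?thesis
  proof (cases "i = j")
    case True then show ?thesis by simp
  next
    case False
    then have "i - 1 < j - 1" using assms by auto
    then have "lam ! (j - 1) \<le> lam ! (i - 1)"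
      using s True assms by (auto simp: sorted_wrt_iff_nth_less)
    then show ?thesis using True assms by (simp add: Defs.part_def)
  qed
qed

lemma part_big: "length lam < j \<Longrightarrow> part lam j = 0"
  by (simp add: Defs.part_def)

lemma frob_iff:
  assumes "is_partition lam" "1 \<le> i"
  shows "i \<le> frob_d lam \<longleftrightarrow> i \<le> part lam i"
proof -
  let ?D = "{i. 1 \<le> i \<and> i \<le> part lam i}"
  have sub: "?D \<subseteq> {1..length lam}"
  proof
    fix x assume "x \<in> ?D"
    then show "x \<in> {1..length lam}" using part_big[of lam x] by (cases "length lam < x") auto
  qed
  have "?D = {1..card ?D}"
  proof (rule down_closed)
    show "finite ?D" using sub finite_subset by blast
    show "\<forall>i\<in>?D. 1 \<le> i" by simp
    show "\<forall>i\<in>?D. \<forall>i'. 1 \<le> i' \<and> i' \<le> i \<longrightarrow> i' \<in> ?D"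
      using part_mono[OF assms(1)] by (auto intro: order_trans)
  qed
  then have "i \<in> ?D \<longleftrightarrow> i \<in> {1..card ?D}" by simp
  then show ?thesis using assms(2) by (simp add: frob_d_def)
qed

lemma conj_iff:
  assumes "is_partition lam" "1 \<le> i" "1 \<le> j"
  shows "i \<le> part lam j \<longleftrightarrow> j \<le> conjp lam i"
proof -
  let ?D = "{j. 1 \<le> j \<and> i \<le> part lam j}"
  have sub: "?D \<subseteq> {1..length lam}"
  proof
    fix x assume "x \<in> ?D"
    then show "x \<in> {1..length lam}" using part_big[of lam x] assms(2) by (cases "length lam < x") auto
  qed
  have "?D = {1..card ?D}"
  proof (rule down_closed)
    show "finite ?D" using sub finite_subset by blast
    show "\<forall>i\<in>?D. 1 \<le> i" by simp
    show "\<forall>i'\<in>?D. \<forall>i''. 1 \<le> i'' \<and> i'' \<le> i' \<longrightarrow> i'' \<in> ?D"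
      using part_mono[OF assms(1)] by (auto intro: order_trans)
  qed
  then have "j \<in> ?D \<longleftrightarrow> j \<in> {1..card ?D}" by simp
  then show ?thesis using assms(3) by (simp add: conjp_def)
qed

lemma real_eq_int: "(real p - real q + 1/2 = real_of_int m + 1/2) \<longleftrightarrow> (int p - int q = m)"
proof -
  have "(real p - real q + 1/2 = real_of_int m + 1/2) \<longleftrightarrow> real_of_int (int p - int q) = real_of_int m"
    by simp
  also have "\<dots> \<longleftrightarrow> int p - int q = m" by (rule of_int_eq_iff)
  finally show ?thesis .
qed

lemma disjoint_SC:
  assumes "is_partition lam" "1 \<le> i" "1 \<le> j"
  shows "int (part lam j) - int j \<noteq> int i - 1 - int (conjp lam i)"
  using conj_iff[OF assms] by (cases "i \<le> part lam j") auto

lemma memS: "x \<in> S_of lam \<longleftrightarrow> (\<exists>j. 1 \<le> j \<and> x = real (part lam j) - real j + 1/2)"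
  by (auto simp: S_of_def)

lemma memC: "x \<in> C_of lam \<longleftrightarrow>
   (\<exists>i. 1 \<le> i \<and> i \<le> frob_d lam \<and> x = real (part lam i) - real i + 1/2) \<or>
   (\<exists>i. 1 \<le> i \<and> i \<le> frob_d lam \<and> x = real i - real (conjp lam i) - 1/2)"
  by (auto simp: C_of_def)

lemma finite_C: "finite (C_of lam)"
proof -
  have "C_of lam = (\<lambda>i. real (part lam i) - real i + 1/2) ` {1..frob_d lam}
     \<union> (\<lambda>i. - (real (conjp lam i) - real i) - 1/2) ` {1..frob_d lam}"
    by (auto simp: C_of_def)
  then show ?thesis by simp
qed

lemma pos_case:
  assumes "is_partition lam" "x > 0"
  shows "x \<in> C_of lam \<longleftrightarrow> x \<in> S_of lam"
proof
  assume "x \<in> C_of lam"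
  then consider (A) i where "1 \<le> i" "i \<le> frob_d lam" "x = real (part lam i) - real i + 1/2"
    | (B) i where "1 \<le> i" "i \<le> frob_d lam" "x = real i - real (conjp lam i) - 1/2"
    unfolding memC by blast
  then show "x \<in> S_of lam"
  proof cases
    case A then show ?thesis unfolding memS by blast
  next
    case B
    then have "i \<le> part lam i" using frob_iff[OF assms(1)] by blast
    then have "i \<le> conjp lam i" using conj_iff[OF assms(1) B(1) B(1)] by blast
    then have "real i \<le> real (conjp lam i)" by simp
    then show ?thesis using B assms by linarith
  qed
next
  assume "x \<in> S_of lam"
  then obtain j where j: "1 \<le> j" "x = real (part lam j) - real j + 1/2" unfolding memS by blast
  then have "real j < real (part lam j) + 1" using assms by linarith
  then have "j \<le> part lam j" by linarith
  then have "j \<le> frob_d lam" using frob_iff[OF assms(1) j(1)] by blast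
  then show "x \<in> C_of lam" unfolding memC using j by blast
qed

lemma neg_case:
  assumes P: "is_partition lam" and H: "x \<in> HalfInt" and neg: "x < 0"
  shows "x \<in> C_of lam \<longleftrightarrow> x \<notin> S_of lam"
proof -
  obtain m where xm: "x = real_of_int m + 1/2" using H by (auto simp: HalfInt_def)
  have mneg: "m \<le> -1" using neg xm by linarith
  show ?thesis
  proof
    assume "x \<in> C_of lam"
    then consider (A) i where "1 \<le> i" "i \<le> frob_d lam" "x = real (part lam i) - real i + 1/2"
      | (B) i where "1 \<le> i" "i \<le> frob_d lam" "x = real i - real (conjp lam i) - 1/2"
      unfolding memC by blast
    then show "x \<notin> S_of lam"
    proof cases
      case A
      then have "i \<le> part lam i" using frob_iff[OF P] by blast
      then have "real i \<le> real (part lam i)" by simp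
      then show ?thesis using A neg by linarith
    next
      case B
      show ?thesis
      proof
        assume "x \<in> S_of lam"
        then obtain j where j: "1 \<le> j" "x = real (part lam j) - real j + 1/2" unfolding memS by blast
        then have "real_of_int (int (part lam j) - int j) = real_of_int (int i - 1 - int (conjp lam i))"
          using B by simp
        then have "int (part lam j) - int j = int i - 1 - int (conjp lam i)" by (rule of_int_eq_iff[THEN iffD1])
        then show False using disjoint_SC[OF P B(1) j(1)] by simp
      qed
    qed
  next
    assume nS: "x \<notin> S_of lam"
    have ne: "\<And>j. 1 \<le> j \<Longrightarrow> int (part lam j) - int j \<noteq> m"
    proof
      fix j :: nat assume "1 \<le> j" "int (part lam j) - int j = m"
      then have h: "real (part lam j) - real j + 1/2 = real_of_int m + 1/2" using real_eq_int by blast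
      have "x \<in> S_of lam" unfolding memS xm using \<open>1 \<le> j\<close> h by (intro exI[of _ j]) simp
      then show False using nS by blast
    qed
    define J where "J = {j. 1 \<le> j \<and> m < int (part lam j) - int j}"
    have "int (part lam 1) - int 1 \<noteq> m" using ne[of 1] by simp
    then have "1 \<in> J" using mneg unfolding J_def by simp
    have "J \<subseteq> {1..nat (int (part lam 1) - m)}"
    proof
      fix j assume "j \<in> J"
      then have "1 \<le> j" "m < int (part lam j) - int j" unfolding J_def by auto
      moreover have "part lam j \<le> part lam 1" using part_mono[OF P, of 1 j] \<open>1 \<le> j\<close> by simp
      ultimately have "int j \<le> int (part lam 1) - m" "1 \<le> j" by linarith+
      then show "j \<in> {1..nat (int (part lam 1) - m)}" by (simp add: le_nat_iff)
    qed
    then have fJ: "finite J" using finite_subset by blast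
    define j0 where "j0 = Max J"
    have "j0 \<in> J" using fJ \<open>1 \<in> J\<close> unfolding j0_def by (intro Max_in) auto
    then have j0: "1 \<le> j0" "m < int (part lam j0) - int j0" unfolding J_def by auto
    have "Suc j0 \<notin> J"
    proof
      assume "Suc j0 \<in> J"
      then have "Suc j0 \<le> j0" using Max_ge[OF fJ] unfolding j0_def by blast
      then show False by simp
    qed
    then have "int (part lam (Suc j0)) - int (Suc j0) \<le> m" unfolding J_def by auto
    moreover have "int (part lam (Suc j0)) - int (Suc j0) \<noteq> m" using ne[of "Suc j0"] by simp
    ultimately have j1: "int (part lam (Suc j0)) - int (Suc j0) < m" by simp
    define i where "i = nat (m + 1 + int j0)"
    have ii: "int i = m + 1 + int j0" unfolding i_def using j1 by simp
    have i1: "1 \<le> i" using ii j1 by simp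
    have "i \<le> part lam j0" using ii j0 by simp
    then have c1: "j0 \<le> conjp lam i" using conj_iff[OF P i1 j0(1)] by simp
    have "\<not> i \<le> part lam (Suc j0)" using ii j1 by simp
    then have c2: "\<not> Suc j0 \<le> conjp lam i" using conj_iff[OF P i1, of "Suc j0"] by simp
    have cj: "conjp lam i = j0" using c1 c2 by simp
    have "i \<le> j0" using ii mneg by simp
    then have "i \<le> part lam i" using conj_iff[OF P i1 i1] cj by simp
    then have "i \<le> frob_d lam" using frob_iff[OF P i1] by simp
    moreover have "x = real i - real (conjp lam i) - 1/2"
    proof -
      have "real i = real_of_int (m + 1 + int j0)" using ii by (metis of_int_of_nat_eq)
      then show ?thesis using xm cj by simp
    qed
    ultimately show "x \<in> C_of lam" unfolding memC using i1 by blast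
  qed
qed



lemma n_inv2: "n_inv [x0, x1] = (if \<not> creation x0 \<and> creation x1 then 1 else 0)"
proof -
  have "{(i, j). i < j \<and> j < length [x0, x1] \<and> \<not> creation ([x0, x1] ! i) \<and> creation ([x0, x1] ! j)}
     = (if \<not> creation x0 \<and> creation x1 then {(0,1)} else {})"
    by (auto simp: less_Suc_eq)
  then show ?thesis unfolding n_inv_def by simp
qed

lemma n_inv4: "n_inv [x0, x1, x2, x3] =
   (\<Sum>p\<in>{(0,1),(0,2),(0,3),(1,2),(1,3),(2,3)}. if \<not> creation ([x0, x1, x2, x3] ! fst p) \<and> creation ([x0, x1, x2, x3] ! snd p) then 1 else 0)"
proof -
  let ?Q = "\<lambda>p. \<not> creation ([x0, x1, x2, x3] ! fst p) \<and> creation ([x0, x1, x2, x3] ! snd p)"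
  have "{(i, j). i < j \<and> j < length [x0, x1, x2, x3] \<and> \<not> creation ([x0, x1, x2, x3] ! i) \<and> creation ([x0, x1, x2, x3] ! j)}
     = {p \<in> {(0,1),(0,2),(0,3),(1,2),(1,3),(2,3)}. ?Q p}"
    by (auto simp: less_Suc_eq numeral_eq_Suc)
  then have "n_inv [x0, x1, x2, x3] = card {p \<in> {(0,1),(0,2),(0,3),(1,2),(1,3),(2,3)}. ?Q p}"
    unfolding n_inv_def by simp
  also have "\<dots> = (\<Sum>p\<in>{p \<in> {(0::nat,1::nat),(0,2),(0,3),(1,2),(1,3),(2,3)}. ?Q p}. 1)" by simp
  also have "\<dots> = (\<Sum>p\<in>{(0,1),(0,2),(0,3),(1,2),(1,3),(2,3)}. if ?Q p then 1 else 0)"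
    by (subst sum.inter_filter) auto
  finally show ?thesis .
qed

lemma no_basis: "normal_ord ops (basis S) = scaleV ((-1)^n_inv ops)
   (word_apply (filter creation ops @ filter (\<lambda>x. \<not> creation x) ops) (scaleV 1 (basis S)))"
  by (metis basis_scale normal_ord_def)

lemma sum1: "(\<Sum>x\<in>C_of lam. sgn x * delta a x) = (if a \<in> C_of lam then sgn a else 0)"
proof -
  have "(\<Sum>x\<in>C_of lam. sgn x * delta a x) = (\<Sum>x\<in>C_of lam. if a = x then sgn x else 0)"
    by (rule sum.cong) (auto simp: delta_def)
  then show ?thesis by (simp add: finite_C)
qed

lemma sum2: "(\<Sum>x\<in>C_of lam. \<Sum>x'\<in>C_of lam. sgn (x * x') * delta a x * delta b x') =
   (if a \<in> C_of lam \<and> b \<in> C_of lam then sgn a * sgn b else 0)"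
proof -
  have "(\<Sum>x\<in>C_of lam. \<Sum>x'\<in>C_of lam. sgn (x * x') * delta a x * delta b x') =
     (\<Sum>x\<in>C_of lam. if a = x then (\<Sum>x'\<in>C_of lam. if b = x' then sgn x * sgn x' else 0) else 0)"
    by (rule sum.cong) (auto simp: delta_def sgn_mult intro!: sum.cong)
  then show ?thesis by (simp add: finite_C)
qed

lemma sg_sq[simp]: "(-1::real)^n * (-1)^n = 1" "x * (-1::real)^n * (-1)^n = x"
  by (simp_all add: power_add[symmetric] flip: mult.assoc)

declare nabove_ins[simp] nabove_rem[simp] act.simps[simp del]

lemma halfint_nz: "a \<in> HalfInt \<Longrightarrow> a \<noteq> 0"
proof
  assume "a \<in> HalfInt" "a = 0"
  then obtain m where "real_of_int m + 1/2 = 0" by (auto simp: HalfInt_def)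
  then have "real_of_int (2*m + 1) = 0" by simp
  then show False by presburger
qed

lemma part1:
  assumes P: "is_partition lam" and H: "a \<in> HalfInt"
  shows "innerF (v_of lam) (Xi2 a a (v_of lam)) = (\<Sum>x\<in>C_of lam. sgn x * delta a x)"
proof -
  let ?S = "S_of lam"
  have "a > 0 \<or> a < 0" using halfint_nz[OF H] by linarith
  then show ?thesis
  proof
    assume a: "a > 0"
    have "innerF (v_of lam) (Xi2 a a (v_of lam)) = (if a \<in> ?S then 1 else 0)"
      unfolding v_of_def Xi2_def no_basis using a by (auto simp: n_inv2)
    then show ?thesis using pos_case[OF P a] a by (simp add: sum1)
  next
    assume a: "a < 0"
    have "innerF (v_of lam) (Xi2 a a (v_of lam)) = (if a \<in> ?S then 0 else -1)"
      unfolding v_of_def Xi2_def no_basis using a by (simp add: n_inv2 Diff_insert_absorb)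
    then show ?thesis using neg_case[OF P H a] a by (simp add: sum1)
  qed
qed


declare act.simps[simp del]
lemma part3:
  assumes P: "is_partition lam" and Ha: "a \<in> HalfInt" and Hb: "b \<in> HalfInt" and ab: "a \<noteq> b"
  shows "innerF (v_of lam) (Xi4 a b b a (v_of lam)) =
           - (\<Sum>x\<in>C_of lam. \<Sum>x'\<in>C_of lam. sgn (x * x') * delta a x * delta b x')"
proof -
  let ?S = "S_of lam"
  let ?ops = "[Psi a, PsiS b, Psi b, PsiS a]"
  have ba: "b \<noteq> a" using ab by simp
  have A: "a > 0 \<or> a < 0" using halfint_nz[OF Ha] by linarith
  have B: "b > 0 \<or> b < 0" using halfint_nz[OF Hb] by linarith
  show ?thesis
  proof (cases "a > 0")
    case a: True
    show ?thesis
    proof (cases "b > 0")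
      case b: True
      have n: "n_inv ?ops = 1" using a b by (simp add: n_inv4)
      have w: "filter creation ?ops @ filter (\<lambda>x. \<not> creation x) ?ops = [Psi a, Psi b, PsiS b, PsiS a]"
        using a b by simp
      have "innerF (v_of lam) (Xi4 a b b a (v_of lam)) = (if a \<in> ?S \<and> b \<in> ?S then -1 else 0)"
        unfolding v_of_def Xi4_def no_basis n w using a b ab ba
        by (cases "a \<in> ?S"; cases "b \<in> ?S") (simp_all add: insert_absorb)
      then show ?thesis using pos_case[OF P a] pos_case[OF P b] a b by (simp add: sum2)
    next
      case False
      then have b: "b < 0" using B by simp
      have n: "n_inv ?ops = 0" using a b by (simp add: n_inv4)
      have w: "filter creation ?ops @ filter (\<lambda>x. \<not> creation x) ?ops = ?ops"
        using a b by simp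
      have "innerF (v_of lam) (Xi4 a b b a (v_of lam)) = (if a \<in> ?S \<and> b \<notin> ?S then 1 else 0)"
        unfolding v_of_def Xi4_def no_basis n w using a b ab ba
        by (cases "a \<in> ?S"; cases "b \<in> ?S") (simp_all add: insert_absorb)
      then show ?thesis using pos_case[OF P a] neg_case[OF P Hb b] a b by (simp add: sum2)
    qed
  next
    case False
    then have a: "a < 0" using A by simp
    show ?thesis
    proof (cases "b > 0")
      case b: True
      have n: "n_inv ?ops = 4" using a b by (simp add: n_inv4)
      have w: "filter creation ?ops @ filter (\<lambda>x. \<not> creation x) ?ops = [Psi b, PsiS a, Psi a, PsiS b]"
        using a b by simp
      have "innerF (v_of lam) (Xi4 a b b a (v_of lam)) = (if a \<notin> ?S \<and> b \<in> ?S then 1 else 0)"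
        unfolding v_of_def Xi4_def no_basis n w using a b ab ba
        by (cases "a \<in> ?S"; cases "b \<in> ?S") (simp_all add: insert_absorb)
      then show ?thesis using neg_case[OF P Ha a] pos_case[OF P b] a b by (simp add: sum2)
    next
      case False
      then have b: "b < 0" using B by simp
      have n: "n_inv ?ops = 3" using a b by (simp add: n_inv4)
      have w: "filter creation ?ops @ filter (\<lambda>x. \<not> creation x) ?ops = [PsiS b, PsiS a, Psi a, Psi b]"
        using a b by simp
      have "innerF (v_of lam) (Xi4 a b b a (v_of lam)) = (if a \<notin> ?S \<and> b \<notin> ?S then -1 else 0)"
        unfolding v_of_def Xi4_def no_basis n w using a b ab ba
        by (cases "a \<in> ?S"; cases "b \<in> ?S") (simp_all add: insert_absorb)
      then show ?thesis using neg_case[OF P Ha a] neg_case[OF P Hb b] a b by (simp add: sum2)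
    qed
  qed
qed


theorem proposition3:
  fixes lam :: "nat list" and a b c d :: real
  assumes "is_partition lam"
    and "a \<in> HalfInt" and "b \<in> HalfInt" and "c \<in> HalfInt" and "d \<in> HalfInt"
  shows "(innerF (v_of lam) (Xi2 a a (v_of lam)) = (\<Sum>x\<in>C_of lam. sgn x * delta a x)) \<and>
         (innerF (v_of lam) (Xi4 a b c d (v_of lam)) \<noteq> 0 \<longrightarrow>
           (a = b \<and> c = d) \<or> (a = d \<and> b = c)) \<and>
         (a \<noteq> b \<longrightarrow> innerF (v_of lam) (Xi4 a b b a (v_of lam)) =
           - (\<Sum>x\<in>C_of lam. \<Sum>x'\<in>C_of lam. sgn (x * x') * delta a x * delta b x'))"
  using part1[OF assms(1,2)] part2[of "S_of lam" a b c d] part3[OF assms(1,2,3)]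
  unfolding v_of_def by blast

end
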